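(* Let $0<c<\Gamma_0$ and $t>0$, and let $\mathcal D=\{(\tau,p):0<\tau<t,\ c<p<\Gamma_0\}$. Let $A$ be the cooperation area and regions II, III, VII as defined in the context. Then: - the maximum of $A$ over the closure (in $\mathcal D$) of region II is attained at $(\tau,p)=\left(\tfrac12 t,\ \sqrt{c\Gamma_0}\right)$; - the maximum over the closure of region III is attained at $\left(\frac{\Gamma_0}{\Gamma_0+c}t,\ \frac{2\Gamma_0 c}{\Gamma_0+c}\right)$; - the maximum over the closure of region VII is attained at $\left(\frac{\Gamma_0-\sqrt{c\Gamma_0}}{\Gamma_0-c}t,\ \sqrt{c\Gamma_0}\right)$.
   Context: The client utility is linear: $\Gamma(d)=\Gamma_0(1-d)$. For $(\tau,p)\in\mathcal D$ write $s=\tau/t$ and, for $w\in(0,1]$, set $K(w)=1-(1-w)s$. Define $$d_s(w;\tau,p)=1-\frac{cK(w)}{wp},\qquad d_c(w;\tau,p)=1-\frac{p}{\Gamma_0K(w)}.$$ The cooperation area is $$A(\tau,p)=\int_0^1\max\{\min(d_s(w;\tau,p),d_c(w;\tau,p)),0\}\,dw.$$ The regions (subsets of $\mathcal D$) are: - region II: $p^2\ge 4c\Gamma_0 s(1-s)$, $p<\Gamma_0(1-s)+cs$, $p<\sqrt{c\Gamma_0}$, and $s<\tfrac12$; - region III: $p^2\ge 4c\Gamma_0 s(1-s)$, $p<\Gamma_0(1-s)+cs$, $p<\sqrt{c\Gamma_0}$, and $s>\frac{\Gamma_0}{\Gamma_0+c}$; - region VII: $p^2\ge4c\Gamma_0 s(1-s)$,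 $p>\Gamma_0(1-s)+cs$, and $p>\sqrt{c\Gamma_0}$. *)

theory Defs
  imports "HOL-Analysis.Analysis"
begin

definition dom_D :: "real \<Rightarrow> real \<Rightarrow> real \<Rightarrow> (real \<times> real) set" where
  "dom_D c G0 t = {(tau, p). 0 < tau \<and> tau < t \<and> c < p \<and> p < G0}"

definition Kw :: "real \<Rightarrow> real \<Rightarrow> real \<Rightarrow> real" where
  "Kw t tau w = 1 - (1 - w) * (tau / t)"

definition d_s :: "real \<Rightarrow> real \<Rightarrow> real \<Rightarrow> real \<Rightarrow> real \<Rightarrow> real" where
  "d_s c t w tau p = 1 - c * Kw t tau w / (w * p)"

definition d_c :: "real \<Rightarrow> real \<Rightarrow> real \<Rightarrow> real \<Rightarrow> real \<Rightarrow> real" where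
  "d_c G0 t w tau p = 1 - p / (G0 * Kw t tau w)"

text \<open>Cooperation area; the integrand on [0,1] (the value at w = 0 is irrelevant).\<close>
definition coop_area :: "real \<Rightarrow> real \<Rightarrow> real \<Rightarrow> real \<times> real \<Rightarrow> real" where
  "coop_area c G0 t q = (case q of (tau, p) \<Rightarrow>
     integral {0..1} (\<lambda>w. max (min (d_s c t w tau p) (d_c G0 t w tau p)) 0))"

definition region_II :: "real \<Rightarrow> real \<Rightarrow> real \<Rightarrow> (real \<times> real) set" where
  "region_II c G0 t = {(tau, p) \<in> dom_D c G0 t.
     p\<^sup>2 \<ge> 4 * c * G0 * (tau/t) * (1 - tau/t) \<and> p < G0 * (1 - tau/t) + c * (tau/t)
     \<and> p < sqrt (c * G0) \<and> tau/t < 1/2}"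

definition region_III :: "real \<Rightarrow> real \<Rightarrow> real \<Rightarrow> (real \<times> real) set" where
  "region_III c G0 t = {(tau, p) \<in> dom_D c G0 t.
     p\<^sup>2 \<ge> 4 * c * G0 * (tau/t) * (1 - tau/t) \<and> p < G0 * (1 - tau/t) + c * (tau/t)
     \<and> p < sqrt (c * G0) \<and> tau/t > G0 / (G0 + c)}"

definition region_VII :: "real \<Rightarrow> real \<Rightarrow> real \<Rightarrow> (real \<times> real) set" where
  "region_VII c G0 t = {(tau, p) \<in> dom_D c G0 t.
     p\<^sup>2 \<ge> 4 * c * G0 * (tau/t) * (1 - tau/t) \<and> p > G0 * (1 - tau/t) + c * (tau/t)
     \<and> p > sqrt (c * G0)}"

definition closure_in_D :: "real \<Rightarrow> real \<Rightarrow> real \<Rightarrow> (real \<times> real) set \<Rightarrow> (real \<times> real) set" where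
  "closure_in_D c G0 t R = closure R \<inter> dom_D c G0 t"

definition max_attained_at :: "(real \<times> real \<Rightarrow> real) \<Rightarrow> (real \<times> real) set \<Rightarrow> real \<times> real \<Rightarrow> bool" where
  "max_attained_at f S x \<longleftrightarrow> x \<in> S \<and> (\<forall>y\<in>S. f y \<le> f x)"

end

theory Submission
  imports Defs
begin

definition FF :: "real \<Rightarrow> real \<Rightarrow> real \<Rightarrow> real \<Rightarrow> real \<Rightarrow> real" where
  "FF c G s p w = min (1 - c * (1 - (1 - w) * s) / (w * p)) (1 - p / (G * (1 - (1 - w) * s)))"

lemma neg0:
  fixes c G p k1 k2 v :: real
  assumes "G>0" "p>0" "0<k2" "k2 \<le> k1" "v>0" "v * G \<le> c"
  shows "min (1 - c * k1/(v * p)) (1 - p/(G * k2)) \<le> 0"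
proof (cases "p \<ge> G * k2")
  case True
  then have "p/(G * k2) \<ge> 1" using assms by (simp add: field_simps)
  then show ?thesis by linarith
next
  case False
  have "p \<le> G * k1" using mult_left_mono[of k2 k1 G] assms False by linarith
  then have "v * p \<le> v * (G * k1)" using assms by (intro mult_left_mono) auto
  also have "\<dots> \<le> c * k1" using assms
    by (metis mult.assoc mult.commute mult_right_mono less_imp_le order_less_le_trans)
  finally have "c * k1/(v * p) \<ge> 1" using assms by (simp add: field_simps)
  then show ?thesis by linarith
qed

lemma pw2:
  fixes a b s p w :: real
  assumes "0<a" "a<b" "0 \<le> s" "s \<le> 1/2" "0<p" "p \<le> a * b" "0<w" "w\<le>1"
  shows "FF (a^2) (b^2) s p w \<le> FF (a^2) (b^2) (1/2) (a * b) w"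
proof -
  define K0 where "K0 = 1-(1-w) * (1/2::real)"
  define K where "K = 1-(1-w) * s"
  have "(1-w) * s \<le> (1-w) * (1/2)" using assms by (intro mult_left_mono) auto
  then have K0p: "K0 > 0" "K0 \<le> K" using assms unfolding K0_def K_def by auto
  have "a^2 * K0/(w * (a * b)) \<le> a^2 * K/(w * p)"
    using assms K0p by (intro frac_le mult_left_mono mult_right_mono) auto
  moreover have "a * b/(b^2 * K0) \<le> a^2 * K0/(w * (a * b))"
  proof -
    have e: "K0^2 - w = ((1-w)/2)^2" unfolding K0_def by (simp add: power2_eq_square algebra_simps)
    have "w \<le> K0^2" using e by (smt (verit) zero_le_power2)
    then have m: "(a*b) * w \<le> (a*b) * K0^2" using assms by (intro mult_left_mono) auto
    have e1: "a * b/(b^2 * K0) = (a*b) * w / (w * b^2 * K0)" using assms K0p by (simp add: power2_eq_square)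
    have e2: "a^2 * K0/(w * (a * b)) = (a*b) * K0^2 / (w * b^2 * K0)" using assms K0p by (simp add: power2_eq_square)
    have "w * b^2 * K0 > 0" using assms K0p by simp
    then show ?thesis unfolding e1 e2 using divide_right_mono[OF m, of "w * b^2 * K0"] by linarith
  qed
  ultimately show ?thesis unfolding FF_def K_def[symmetric] K0_def[symmetric] by linarith
qed

lemma ds_mono:
  fixes c w p p0 K K0 :: real
  assumes "c>0" "w>0" "p>0" "p0>0" "K0 * p \<le> K * p0"
  shows "1 - c * K / (w * p) \<le> 1 - c * K0 / (w * p0)"
proof -
  have "K0 / p0 \<le> K / p" using assms by (simp add: field_simps)
  then have "c * (K0 / p0) / w \<le> c * (K / p) / w" using assms
    by (intro divide_right_mono mult_left_mono) auto
  then show ?thesis by (simp add: field_simps)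
qed

lemma dc_mono:
  fixes G p p0 K K0 :: real
  assumes "G>0" "K>0" "K0>0" "p0 * K \<le> p * K0"
  shows "1 - p / (G * K) \<le> 1 - p0 / (G * K0)"
proof -
  have "p0 / K0 \<le> p / K" using assms by (simp add: field_simps)
  then have "(p0 / K0) / G \<le> (p / K) / G" using assms
    by (intro divide_right_mono) auto
  then show ?thesis by (simp add: field_simps)
qed

lemma ds_le_dc:
  fixes c G w p0 K0 :: real
  assumes "c>0" "G>0" "w>0" "p0>0" "K0>0" "w * p0^2 \<le> c * G * K0^2"
  shows "1 - c * K0 / (w * p0) \<le> 1 - p0 / (G * K0)"
proof -
  have "p0 * (w * p0) \<le> c * K0 * (G * K0)" using assms(6) by (simp add: power2_eq_square algebra_simps)
  then have "p0 / (G * K0) \<le> c * K0 / (w * p0)" using assms by (simp add: field_simps)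
  then show ?thesis by linarith
qed

lemma dc_le_ds:
  fixes c G w p0 K0 :: real
  assumes "c>0" "G>0" "w>0" "p0>0" "K0>0" "c * G * K0^2 \<le> w * p0^2"
  shows "1 - p0 / (G * K0) \<le> 1 - c * K0 / (w * p0)"
proof -
  have "c * K0 * (G * K0) \<le> p0 * (w * p0)" using assms(6) by (simp add: power2_eq_square algebra_simps)
  then have "c * K0 / (w * p0) \<le> p0 / (G * K0)" using assms by (simp add: field_simps)
  then show ?thesis by linarith
qed

lemma pw3:
  fixes a b s p w :: real
  assumes "0<a" "a<b" "b^2/(a^2+b^2) \<le> s" "s < 1" "0<p" "p \<le> b^2 - s * (b^2 - a^2)" "0<w" "w\<le>1"
  shows "max (FF (a^2) (b^2) s p w) 0 \<le> max (FF (a^2) (b^2) (b^2/(a^2+b^2)) (2 * a^2 * b^2/(a^2+b^2)) w) 0"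
proof -
  define s0 where "s0 = b^2/(a^2+b^2)"
  define p0 where "p0 = 2 * a^2 * b^2/(a^2+b^2)"
  define K0 where "K0 = 1-(1-w) * s0"
  define K where "K = 1-(1-w) * s"
  have S: "a^2+b^2 > 0" using assms by (intro add_pos_pos) auto
  have K0e: "K0 = (a^2 + b^2 * w)/(a^2+b^2)" unfolding K0_def s0_def using S
    using assms by (simp add: eq_divide_eq algebra_simps diff_divide_distrib) (simp add: field_simps)
  have "(1-w) * s \<le> 1-w" using mult_left_mono[of s 1 "1-w"] assms by simp
  then have Kp: "K > 0" using assms unfolding K_def by linarith
  have K0p: "K0 > 0" unfolding K0e using assms S by (intro divide_pos_pos add_pos_nonneg) auto
  have p0p: "p0 > 0" unfolding p0_def using assms S by simp
  show ?thesis
  proof (cases "w * b^2 \<le> a^2")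
    case True
    have "FF (a^2) (b^2) s p w \<le> 0" unfolding FF_def K_def[symmetric]
      using neg0[of "b^2" p K K w "a^2"] assms Kp True by (simp add: mult.commute)
    then show ?thesis by simp
  next
    case False
    have s0e: "s0 * (a^2+b^2) = b^2" using S by (simp add: s0_def)
    have "(b^2 - s0 * (b^2 - a^2)) * (a^2+b^2) = b^2 * (a^2+b^2) - (s0 * (a^2+b^2)) * (b^2-a^2)"
      by (simp add: algebra_simps)
    also have "\<dots> = 2 * a^2 * b^2" unfolding s0e by (simp add: algebra_simps power2_eq_square)
    finally have L0: "p0 = b^2 - s0 * (b^2 - a^2)" unfolding p0_def using S by (simp add: divide_eq_eq)
    have id: "K * p0 - K0 * (b^2 - s * (b^2 - a^2)) = (s - s0) * (w * b^2 - a^2)"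
      unfolding K_def K0_def by (subst L0) (simp add: algebra_simps)
    have "(s - s0) * (w * b^2 - a^2) \<ge> 0" using False assms unfolding s0_def by simp
    then have "K0 * (b^2 - s * (b^2 - a^2)) \<le> K * p0" using id by linarith
    moreover have "K0 * p \<le> K0 * (b^2 - s * (b^2 - a^2))" using assms K0p by (intro mult_left_mono) auto
    ultimately have "K0 * p \<le> K * p0" by linarith
    then have "1 - a^2 * K / (w * p) \<le> 1 - a^2 * K0 / (w * p0)"
      using ds_mono[of "a^2" w p p0 K0 K] assms p0p by simp
    moreover have "1 - a^2 * K0 / (w * p0) \<le> 1 - p0 / (b^2 * K0)"
    proof (rule ds_le_dc)
      have k: "K0 * (a^2+b^2) = a^2 + b^2 * w" using K0e S by simp
      have q: "p0 * (a^2+b^2) = 2 * a^2 * b^2" using S unfolding p0_def by simp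
      have "(a^2 * b^2 * K0^2 - w * p0^2) * (a^2+b^2)^2 = a^2 * b^2 * (K0 * (a^2+b^2))^2 - w * (p0 * (a^2+b^2))^2"
        by (simp add: algebra_simps power2_eq_square)
      also have "\<dots> = a^2 * b^2 * (a^2 - b^2 * w)^2" unfolding k q by (simp add: algebra_simps power2_eq_square)
      also have "\<dots> \<ge> 0" by simp
      finally have "(a^2 * b^2 * K0^2 - w * p0^2) * (a^2+b^2)^2 \<ge> 0" .
      moreover have "(a^2+b^2)^2 > 0" using S assms by simp
      ultimately have "a^2 * b^2 * K0^2 - w * p0^2 \<ge> 0" by (smt (verit) mult_neg_pos)
      then show "w * p0^2 \<le> a^2 * b^2 * K0^2" by linarith
    qed (use assms K0p p0p in auto)
    ultimately show ?thesis unfolding FF_def K_def[symmetric] K0_def[symmetric] s0_def[symmetric] p0_def[symmetric]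
      by linarith
  qed
qed

lemma pw7:
  fixes a b s p w :: real
  assumes "0<a" "a<b" "0 \<le> s" "s < 1" "a * b \<le> p" "b^2 - s * (b^2 - a^2) \<le> p" "0<w" "w\<le>1"
  shows "max (FF (a^2) (b^2) s p w) 0 \<le> max (FF (a^2) (b^2) (b/(a+b)) (a * b) w) 0"
proof -
  define s0 where "s0 = b/(a+b)"
  define p0 where "p0 = a * b"
  define K0 where "K0 = 1-(1-w) * s0"
  define K where "K = 1-(1-w) * s"
  have S: "a+b > 0" using assms by simp
  have K0e: "K0 = (a + b * w)/(a+b)" unfolding K0_def s0_def using S by (simp add: field_simps)
  have "(1-w) * s \<le> 1-w" using mult_left_mono[of s 1 "1-w"] assms by simp
  then have Kp: "K > 0" using assms unfolding K_def by linarith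
  have K0p: "K0 > 0" unfolding K0e using assms S by (intro divide_pos_pos add_pos_nonneg) auto
  have p0p: "p0 > 0" unfolding p0_def using assms S by simp
  have pp: "p > 0" using assms p0p p0_def by linarith
  show ?thesis
  proof (cases "w * b^2 \<le> a^2")
    case True
    have "FF (a^2) (b^2) s p w \<le> 0" unfolding FF_def K_def[symmetric]
      using neg0[of "b^2" p K K w "a^2"] assms Kp True pp by (simp add: mult.commute)
    then show ?thesis by simp
  next
    case False
    have L0: "p0 = b^2 - s0 * (b^2 - a^2)" unfolding p0_def s0_def using S
      by (simp add: field_simps power2_eq_square)
    have "p0 * K \<le> p * K0"
    proof (cases "s0 \<le> s")
      case True
      have "K \<le> K0" unfolding K_def K0_def using True assms by (intro diff_left_mono mult_left_mono) auto
      then have "p0 * K \<le> p0 * K0" using p0p by (intro mult_left_mono) auto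
      also have "\<dots> \<le> p * K0" using assms K0p unfolding p0_def by (intro mult_right_mono) auto
      finally show ?thesis .
    next
      case False2: False
      have id: "(b^2 - s * (b^2 - a^2)) * K0 - p0 * K = (s0 - s) * (w * b^2 - a^2)"
        unfolding K_def K0_def by (subst L0) (simp add: algebra_simps)
      have "(s0 - s) * (w * b^2 - a^2) \<ge> 0" using False False2 by simp
      then have "p0 * K \<le> (b^2 - s * (b^2 - a^2)) * K0" using id by linarith
      also have "\<dots> \<le> p * K0" using assms K0p by (intro mult_right_mono) auto
      finally show ?thesis .
    qed
    then have "1 - p / (b^2 * K) \<le> 1 - p0 / (b^2 * K0)"
      using dc_mono[of "b^2" K K0 p0 p] assms Kp K0p by simp
    moreover have "1 - p0 / (b^2 * K0) \<le> 1 - a^2 * K0 / (w * p0)"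
    proof (rule dc_le_ds)
      have k: "K0 * (a+b) = a + b * w" using K0e S by simp
      have "(w * p0^2 - a^2 * b^2 * K0^2) * (a+b)^2 = w * a^2 * b^2 * (a+b)^2 - a^2 * b^2 * (K0 * (a+b))^2"
        unfolding p0_def by (simp add: algebra_simps power2_eq_square)
      also have "\<dots> = a^2 * b^2 * ((1 - w) * (w * b^2 - a^2))" unfolding k by (simp add: algebra_simps power2_eq_square)
      also have "\<dots> \<ge> 0" using False assms by simp
      finally have "(w * p0^2 - a^2 * b^2 * K0^2) * (a+b)^2 \<ge> 0" .
      moreover have "(a+b)^2 > 0" using S by simp
      ultimately have "w * p0^2 - a^2 * b^2 * K0^2 \<ge> 0" by (smt (verit) mult_neg_pos)
      then show "a^2 * b^2 * K0^2 \<le> w * p0^2" by linarith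
    qed (use assms K0p p0p in auto)
    ultimately show ?thesis unfolding FF_def K_def[symmetric] K0_def[symmetric] s0_def[symmetric] p0_def[symmetric]
      by linarith
  qed
qed

definition HH :: "real \<Rightarrow> real \<Rightarrow> real \<Rightarrow> real \<Rightarrow> real \<Rightarrow> real" where
  "HH c G s p w = max (min (1 - c * (1 - (1 - max w (c/G)) * s) / (max w (c/G) * p))
                           (1 - p / (G * (1 - (1 - w) * s)))) 0"

lemma K_pos:
  fixes s w :: real
  assumes "0 \<le> s" "s < 1" "0 \<le> w"
  shows "1 - (1 - w) * s > 0"
proof (cases "w \<le> 1")
  case True
  have "(1-w) * s \<le> 1 * s" using assms True by (intro mult_right_mono) auto
  then show ?thesis using assms by linarith
next
  case False
  have "(1-w) * s \<le> 0" using assms False by (simp add: mult_nonpos_nonneg)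
  then show ?thesis by linarith
qed

lemma HH_zero:
  fixes c G s p w :: real
  assumes "0<c" "0<G" "0 \<le> s" "s < 1" "0<p" "0 \<le> w" "w \<le> c/G"
  shows "HH c G s p w = 0"
proof -
  have m: "max w (c/G) = c/G" using assms by simp
  have "(1 - w) * s \<ge> (1 - c/G) * s" using assms by (intro mult_right_mono) auto
  then have le: "1 - (1 - w) * s \<le> 1 - (1 - c/G) * s" by linarith
  have "min (1 - c * (1 - (1 - c/G) * s) / (c/G * p)) (1 - p / (G * (1 - (1 - w) * s))) \<le> 0"
    using neg0[of G p "1 - (1 - w) * s" "1 - (1 - c/G) * s" "c/G" c] assms K_pos[of s w] le
    by simp
  then show ?thesis unfolding HH_def m by simp
qed

lemma HH_eq:
  fixes c G s p w :: real
  assumes "0<c" "0<G" "0 \<le> s" "s < 1" "0<p" "0 < w"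
  shows "HH c G s p w = max (FF c G s p w) 0"
proof (cases "c/G \<le> w")
  case True
  then show ?thesis unfolding HH_def FF_def by (simp add: max_absorb1)
next
  case False
  have "w < c / G" using False by simp
  then have "w * G < c" using assms by (simp add: pos_less_divide_eq)
  then have "w * G \<le> c" by simp
  then have "FF c G s p w \<le> 0" unfolding FF_def
    using neg0[of G p "1 - (1 - w) * s" "1 - (1 - w) * s" w c] assms K_pos[of s w]
    by simp
  then show ?thesis using HH_zero[of c G s p w] assms False by simp
qed

lemma HH_cont:
  fixes c G s p :: real
  assumes "0<c" "0<G" "0 \<le> s" "s < 1" "0<p"
  shows "continuous_on {0..1} (HH c G s p)"
proof -
  have "\<forall>w\<in>{0..1}. max w (c/G) * p \<noteq> 0" using assms by (auto simp: max_def)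
  moreover have "\<forall>w\<in>{0..1}. G * (1 - (1 - w) * s) \<noteq> 0"
  proof
    fix w :: real assume "w \<in> {0..1}"
    then have "1 - (1 - w) * s > 0" using K_pos[of s w] assms by auto
    then show "G * (1 - (1 - w) * s) \<noteq> 0" using assms by simp
  qed
  ultimately show ?thesis unfolding HH_def by (intro continuous_intros) auto
qed

lemma integrand_eq:
  "max (min (d_s c t w tau p) (d_c G t w tau p)) 0 = max (FF c G (tau/t) p w) 0"
  unfolding d_s_def d_c_def Kw_def FF_def by simp

lemma area_HH:
  fixes c G t tau p :: real
  assumes "0<c" "0<G" "0<t" "0 \<le> tau" "tau < t" "0<p"
  shows "coop_area c G t (tau, p) = integral {0..1} (HH c G (tau/t) p)"
  unfolding coop_area_def
proof (simp, rule integral_spike[of "{0}"])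
  show "negligible {0::real}" by auto
next
  fix w assume "w \<in> {0..1::real} - {0}"
  then have "w > 0" by auto
  moreover have "0 \<le> tau/t" "tau/t < 1" using assms by auto
  ultimately show "HH c G (tau / t) p w = max (min (d_s c t w tau p) (d_c G t w tau p)) 0"
    unfolding integrand_eq using HH_eq[of c G "tau/t" p w] assms by simp
qed

lemma area_le:
  fixes c G t tau p tau0 p0 :: real
  assumes "0<c" "0<G" "0<t" "0 \<le> tau" "tau < t" "0<p" "0 \<le> tau0" "tau0 < t" "0<p0"
    and pw: "\<And>w. 0 < w \<Longrightarrow> w \<le> 1 \<Longrightarrow> max (FF c G (tau/t) p w) 0 \<le> max (FF c G (tau0/t) p0 w) 0"
  shows "coop_area c G t (tau, p) \<le> coop_area c G t (tau0, p0)"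
proof -
  have s: "0 \<le> tau/t" "tau/t < 1" "0 \<le> tau0/t" "tau0/t < 1" using assms by auto
  show ?thesis unfolding area_HH[OF assms(1-6)] area_HH[OF assms(1-3,7-9)]
  proof (rule integral_le)
    show "HH c G (tau / t) p integrable_on {0..1}"
      by (rule integrable_continuous_interval, rule HH_cont) (use assms s in auto)
    show "HH c G (tau0 / t) p0 integrable_on {0..1}"
      by (rule integrable_continuous_interval, rule HH_cont) (use assms s in auto)
  next
    fix w :: real assume w: "w \<in> {0..1}"
    show "HH c G (tau / t) p w \<le> HH c G (tau0 / t) p0 w"
    proof (cases "w = 0")
      case True
      then show ?thesis using HH_zero[of c G "tau/t" p w] HH_zero[of c G "tau0/t" p0 w] assms s by simp
    next
      case False
      then have "w > 0" using w by auto
      then show ?thesis using HH_eq[of c G "tau/t" p w] HH_eq[of c G "tau0/t" p0 w] assms s pw[of w] w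
        by simp
    qed
  qed
qed

lemma regII:
  fixes a b t :: real
  assumes ab: "0<a" "a<b" and t: "0<t"
  shows "max_attained_at (coop_area (a^2) (b^2) t) (closure_in_D (a^2) (b^2) t (region_II (a^2) (b^2) t))
           (t / 2, sqrt (a^2 * b^2))"
proof -
  have sq: "sqrt (a^2 * b^2) = a * b" using ab by (simp add: real_sqrt_mult)
  have abl: "a^2 < a * b" "a * b < b^2" using ab by (simp_all add: power2_eq_square)
  let ?R = "region_II (a^2) (b^2) t"
  let ?f = "\<lambda>\<delta>::real. (t * (1/2 - \<delta>), a * b * (1 - \<delta>^2))"
  have "(?f \<longlongrightarrow> (t * (1/2 - 0), a * b * (1 - 0^2))) (at_right 0)"
    by (intro tendsto_intros)
  then have T: "(?f \<longlongrightarrow> (t / 2, a * b)) (at_right 0)" by simp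
  have Tp: "((\<lambda>\<delta>::real. a * b * (1 - \<delta>^2)) \<longlongrightarrow> a * b) (at_right 0)"
    using tendsto_snd[OF T] by simp
  have "((\<lambda>\<delta>::real. b^2 * (1 - (1/2 - \<delta>)) + a^2 * (1/2 - \<delta>) - a * b * (1 - \<delta>^2)) \<longlongrightarrow>
         b^2 * (1 - (1/2 - 0)) + a^2 * (1/2 - 0) - a * b * (1 - 0^2)) (at_right 0)"
    by (intro tendsto_intros)
  moreover have "b^2 * (1 - (1/2 - 0)) + a^2 * (1/2 - 0) - a * b * (1 - 0^2) > 0"
  proof -
    have "b^2 * (1 - (1/2 - 0)) + a^2 * (1/2 - 0) - a * b * (1 - 0^2) = (b - a)^2 / 2"
      by (simp add: power2_eq_square algebra_simps)
    moreover have "(b - a)^2 / 2 > 0" using ab by simp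
    ultimately show ?thesis by linarith
  qed
  ultimately have E4: "eventually (\<lambda>\<delta>::real. b^2 * (1 - (1/2 - \<delta>)) + a^2 * (1/2 - \<delta>) - a * b * (1 - \<delta>^2) > 0) (at_right 0)"
    by (rule order_tendstoD(1))
  have E3: "eventually (\<lambda>\<delta>::real. a^2 < a * b * (1 - \<delta>^2)) (at_right 0)"
    using order_tendstoD(1)[OF Tp abl(1)] .
  have E1: "eventually (\<lambda>\<delta>::real. 0 < \<delta>) (at_right 0)" by (rule eventually_at_right_less)
  have E2: "eventually (\<lambda>\<delta>::real. \<delta> < 1/2) (at_right 0)"
    using order_tendstoD(2)[OF tendsto_ident_at[of "0::real" "{0<..}"], of "1/2"] by simp
  have ev: "eventually (\<lambda>\<delta>. ?f \<delta> \<in> ?R) (at_right 0)"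
    using E1 E2 E3 E4
  proof eventually_elim
    case (elim \<delta>)
    have d2: "\<delta>^2 < 1" unfolding power2_eq_square using elim mult_strict_mono[of \<delta> 1 \<delta> 1] by simp
    have d2p: "\<delta>^2 > 0" using elim by simp
    have p1: "a * b * (1 - \<delta>^2) < a * b" using ab d2p by simp
    have p2: "a * b * (1 - \<delta>^2) < b^2" using p1 abl by linarith
    have p3: "(a * b * (1 - \<delta>^2))^2 - 4 * a^2 * b^2 * (1/2 - \<delta>) * (1 - (1/2 - \<delta>)) = a^2 * b^2 * (2 * \<delta>^2 + \<delta>^2 * \<delta>^2)"
      by (simp add: power2_eq_square algebra_simps)
    have p4: "a^2 * b^2 * (2 * \<delta>^2 + \<delta>^2 * \<delta>^2) \<ge> 0" by simp
    have s: "t * (1/2 - \<delta>) / t = 1/2 - \<delta>" using t by simp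
    have q1: "0 < t * (1/2 - \<delta>)" "t * (1/2 - \<delta>) < t" using elim t by auto
    have q2: "(a * b * (1 - \<delta>^2))^2 \<ge> 4 * a^2 * b^2 * (1/2 - \<delta>) * (1 - (1/2 - \<delta>))"
      using p3 p4 by linarith
    show ?case unfolding region_II_def dom_D_def s sq
      using q1 q2 elim(3,4) p1 p2 elim(1) by simp
  qed
  have x0R: "(t/2, a * b) \<in> closure ?R"
    by (rule Lim_in_closed_set[OF closed_closure _ _ T]) (use ev in \<open>auto elim!: eventually_mono intro: closure_subset[THEN subsetD]\<close>)
  have x0D: "(t/2, a * b) \<in> dom_D (a^2) (b^2) t" unfolding dom_D_def using t abl by auto
  define C where "C = {q::real\<times>real. snd q \<le> a * b} \<inter> {q. fst q / t \<le> 1/2}"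
  have "closed C" unfolding C_def
    using t by (intro closed_Int closed_Collect_le continuous_intros) auto
  moreover have "?R \<subseteq> C" unfolding C_def region_II_def sq by auto
  ultimately have RC: "closure ?R \<subseteq> C" by (rule closure_minimal[rotated])
  show ?thesis unfolding max_attained_at_def closure_in_D_def sq
  proof (intro conjI ballI)
    show "(t/2, a * b) \<in> closure ?R \<inter> dom_D (a^2) (b^2) t" using x0R x0D by simp
  next
    fix y assume y: "y \<in> closure ?R \<inter> dom_D (a^2) (b^2) t"
    obtain tau p where yy: "y = (tau, p)" by fastforce
    have yD: "0 < tau" "tau < t" "a^2 < p" "p < b^2" using y yy unfolding dom_D_def by auto
    have yC: "p \<le> a * b" "tau / t \<le> 1/2" using y yy RC unfolding C_def by auto
    have pp: "0 < p" using yD(3) by (smt (verit) zero_le_power2)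
    show "coop_area (a^2) (b^2) t y \<le> coop_area (a^2) (b^2) t (t/2, a * b)"
      unfolding yy
    proof (rule area_le)
      fix w :: real assume w: "0 < w" "w \<le> 1"
      show "max (FF (a^2) (b^2) (tau/t) p w) 0 \<le> max (FF (a^2) (b^2) (t/2/t) (a * b) w) 0"
        using pw2[of a b "tau/t" p w] ab yC yD w pp t by (simp add: max.coboundedI1)
    qed (use ab t yD pp abl in auto)
  qed
qed

lemma regIII:
  fixes a b t :: real
  assumes ab: "0<a" "a<b" and t: "0<t"
  shows "max_attained_at (coop_area (a^2) (b^2) t) (closure_in_D (a^2) (b^2) t (region_III (a^2) (b^2) t))
           (b^2 / (b^2 + a^2) * t, 2 * b^2 * a^2 / (b^2 + a^2))"
proof -
  define s0 where "s0 = b^2 / (a^2 + b^2)"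
  define p0 where "p0 = 2 * a^2 * b^2 / (a^2 + b^2)"
  have S: "a^2 + b^2 > 0" using ab by (intro add_pos_pos) auto
  have x0e: "b^2 / (b^2 + a^2) * t = t * s0" "2 * b^2 * a^2 / (b^2 + a^2) = p0"
    unfolding s0_def p0_def by (simp_all add: ac_simps)
  have sq: "sqrt (a^2 * b^2) = a * b" using ab by (simp add: real_sqrt_mult)
  have abl0: "a^2 < a * b" "a * b < b^2" using ab by (simp_all add: power2_eq_square)
  have abl: "a^2 < a * b" "a * b < b^2" "a^2 < b^2" using abl0 by auto
  have s0e: "s0 * (a^2 + b^2) = b^2" unfolding s0_def using S by simp
  have s01: "0 < s0" "s0 < 1" unfolding s0_def using S ab abl by (simp_all add: divide_less_eq)
  have p0e: "p0 * (a^2 + b^2) = 2 * a^2 * b^2" unfolding p0_def using S by simp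
  have L0: "b^2 * (1 - s0) + a^2 * s0 = p0"
  proof -
    have "(b^2 * (1 - s0) + a^2 * s0) * (a^2 + b^2) = b^2 * (a^2 + b^2) - (s0 * (a^2 + b^2)) * (b^2 - a^2)"
      by (simp add: algebra_simps)
    also have "\<dots> = p0 * (a^2 + b^2)" unfolding s0e p0e by (simp add: algebra_simps power2_eq_square)
    finally show ?thesis using S ab by simp
  qed
  have p0l: "a^2 < p0" "p0 < b^2" "p0 < a * b"
  proof -
    have "a^2 * (a^2 + b^2) < 2 * a^2 * b^2" using abl ab by (simp add: power2_eq_square algebra_simps)
    then show "a^2 < p0" using p0e S by (smt (verit) mult_right_mono)
    have "2 * a^2 * b^2 < b^2 * (a^2 + b^2)" using abl ab by (simp add: power2_eq_square algebra_simps)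
    then show "p0 < b^2" using p0e S by (smt (verit) mult_right_mono)
    have "0 < a * b * (b - a)^2" using ab by simp
    then have "2 * a^2 * b^2 < a * b * (a^2 + b^2)" by (simp add: power2_eq_square algebra_simps)
    then show "p0 < a * b" using p0e S by (smt (verit) mult_right_mono)
  qed
  let ?R = "region_III (a^2) (b^2) t"
  define P where "P = (\<lambda>\<delta>::real. b^2 * (1 - (s0 + \<delta>)) + a^2 * (s0 + \<delta>) - \<delta>^2 * (a^2 + b^2) / 2)"
  let ?f = "\<lambda>\<delta>::real. (t * (s0 + \<delta>), P \<delta>)"
  have TP0: "(P \<longlongrightarrow> P 0) (at_right 0)" unfolding P_def by (intro tendsto_intros) auto
  have P0: "P 0 = p0" unfolding P_def using L0 by simp
  have TP: "(P \<longlongrightarrow> p0) (at_right 0)" using TP0 P0 by simp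
  have "(?f \<longlongrightarrow> (t * (s0 + 0), p0)) (at_right 0)"
    by (intro tendsto_intros TP)
  then have T: "(?f \<longlongrightarrow> (t * s0, p0)) (at_right 0)" by simp
  have Ts: "((\<lambda>\<delta>::real. s0 + \<delta>) \<longlongrightarrow> s0 + 0) (at_right 0)" by (intro tendsto_intros)
  have E1: "eventually (\<lambda>\<delta>::real. 0 < \<delta>) (at_right 0)" by (rule eventually_at_right_less)
  have E2: "eventually (\<lambda>\<delta>::real. s0 + \<delta> < 1) (at_right 0)"
    using order_tendstoD(2)[OF Ts, of 1] s01 by simp
  have E3: "eventually (\<lambda>\<delta>. a^2 < P \<delta>) (at_right 0)" using order_tendstoD(1)[OF TP p0l(1)] .
  have E4: "eventually (\<lambda>\<delta>. P \<delta> < b^2) (at_right 0)" using order_tendstoD(2)[OF TP p0l(2)] .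
  have E5: "eventually (\<lambda>\<delta>. P \<delta> < a * b) (at_right 0)" using order_tendstoD(2)[OF TP p0l(3)] .
  have ev: "eventually (\<lambda>\<delta>. ?f \<delta> \<in> ?R) (at_right 0)"
    using E1 E2 E3 E4 E5
  proof eventually_elim
    case (elim \<delta>)
    define s where "s = s0 + \<delta>"
    define L where "L = b^2 * (1 - s) + a^2 * s"
    define e where "e = \<delta>^2 * (a^2 + b^2) / 2"
    have Pd: "P \<delta> = L - e" unfolding P_def L_def e_def s_def by simp
    have ep: "e > 0" unfolding e_def using elim S by simp
    have s1: "0 < s" "s < 1" using elim s01 unfolding s_def by auto
    have id1: "L^2 - 4 * a^2 * b^2 * s * (1 - s) = (b^2 - s * (a^2 + b^2))^2"
      unfolding L_def by (simp add: power2_eq_square algebra_simps)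
    have id2: "b^2 - s * (a^2 + b^2) = - \<delta> * (a^2 + b^2)" unfolding s_def using s0e by (simp add: algebra_simps)
    have Ll: "L \<le> a^2 + b^2"
    proof -
      have "b^2 * (1 - s) \<le> b^2" "a^2 * s \<le> a^2" using s1 by (simp_all add: mult_left_le)
      then show ?thesis unfolding L_def by linarith
    qed
    have "2 * L * e \<le> 2 * (a^2 + b^2) * e" using Ll ep by (intro mult_right_mono) auto
    also have "\<dots> = (\<delta> * (a^2 + b^2))^2" unfolding e_def by (simp add: power2_eq_square)
    finally have le1: "2 * L * e \<le> (\<delta> * (a^2 + b^2))^2" .
    have "(L - e)^2 = L^2 - 2 * L * e + e^2" by (simp add: power2_eq_square algebra_simps)
    then have q2: "(P \<delta>)^2 \<ge> 4 * a^2 * b^2 * s * (1 - s)"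
      unfolding Pd using id1 id2 le1 by (smt (verit) zero_le_power2 power_mult_distrib power2_minus)
    have q3: "P \<delta> < L" using Pd ep by simp
    have st: "t * s / t = s" using t by simp
    have q1: "0 < t * s" "t * s < t" using s1 t by auto
    have q4: "b^2 / (b^2 + a^2) < s" using elim s0_def s_def by (simp add: ac_simps)
    show ?case unfolding region_III_def dom_D_def s_def[symmetric] st sq
      using q1 q2 q3 q4 elim(3,4,5) unfolding L_def by (simp add: ac_simps)
  qed
  have x0R: "(t * s0, p0) \<in> closure ?R"
    by (rule Lim_in_closed_set[OF closed_closure _ _ T]) (use ev in \<open>auto elim!: eventually_mono intro: closure_subset[THEN subsetD]\<close>)
  have x0D: "(t * s0, p0) \<in> dom_D (a^2) (b^2) t" unfolding dom_D_def using t s01 p0l by auto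
  define C where "C = {q::real\<times>real. s0 \<le> fst q / t} \<inter> {q. snd q \<le> b^2 * (1 - fst q / t) + a^2 * (fst q / t)}"
  have "closed C" unfolding C_def
    using t by (intro closed_Int closed_Collect_le continuous_intros) auto
  moreover have "?R \<subseteq> C" unfolding C_def region_III_def s0_def by (auto simp: ac_simps)
  ultimately have RC: "closure ?R \<subseteq> C" by (rule closure_minimal[rotated])
  show ?thesis unfolding max_attained_at_def closure_in_D_def x0e
  proof (intro conjI ballI)
    show "(t * s0, p0) \<in> closure ?R \<inter> dom_D (a^2) (b^2) t" using x0R x0D by simp
  next
    fix y assume y: "y \<in> closure ?R \<inter> dom_D (a^2) (b^2) t"
    obtain tau p where yy: "y = (tau, p)" by fastforce
    have yD: "0 < tau" "tau < t" "a^2 < p" "p < b^2" using y yy unfolding dom_D_def by auto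
    have yC: "s0 \<le> tau / t" "p \<le> b^2 * (1 - tau / t) + a^2 * (tau / t)" using y yy RC unfolding C_def by auto
    have pp: "0 < p" using yD(3) by (smt (verit) zero_le_power2)
    have yL: "p \<le> b^2 - tau / t * (b^2 - a^2)" using yC(2) by (simp add: algebra_simps)
    have st: "t * s0 / t = s0" using t by simp
    show "coop_area (a^2) (b^2) t y \<le> coop_area (a^2) (b^2) t (t * s0, p0)"
      unfolding yy
    proof (rule area_le)
      fix w :: real assume w: "0 < w" "w \<le> 1"
      show "max (FF (a^2) (b^2) (tau/t) p w) 0 \<le> max (FF (a^2) (b^2) (t * s0 / t) p0 w) 0"
        unfolding st using pw3[of a b "tau/t" p w] ab yC yD w pp t yL unfolding s0_def p0_def by simp
    next
      show "0 < p0" using p0l(1) by (smt (verit) zero_le_power2)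
    qed (use ab t yD pp abl s01 p0l in auto)
  qed
qed

lemma regVII:
  fixes a b t :: real
  assumes ab: "0<a" "a<b" and t: "0<t"
  shows "max_attained_at (coop_area (a^2) (b^2) t) (closure_in_D (a^2) (b^2) t (region_VII (a^2) (b^2) t))
           ((b^2 - sqrt (a^2 * b^2)) / (b^2 - a^2) * t, sqrt (a^2 * b^2))"
proof -
  define s0 where "s0 = b / (a + b)"
  have sq: "sqrt (a^2 * b^2) = a * b" using ab by (simp add: real_sqrt_mult)
  have abl0: "a^2 < a * b" "a * b < b^2" using ab by (simp_all add: power2_eq_square)
  have abl: "a^2 < a * b" "a * b < b^2" "a^2 < b^2" using abl0 by auto
  have x0e: "(b^2 - a * b) / (b^2 - a^2) = s0" unfolding s0_def
  proof -
    have "b^2 - a^2 \<noteq> 0" "a + b \<noteq> 0" using abl ab by auto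
    then show "(b^2 - a * b) / (b^2 - a^2) = b / (a + b)"
      by (simp add: frac_eq_eq power2_eq_square algebra_simps)
  qed
  have s01: "0 < s0" "s0 < 1" unfolding s0_def using ab by (simp_all add: divide_less_eq)
  have L0: "b^2 * (1 - s0) + a^2 * s0 = a * b"
  proof -
    have S: "a + b > 0" using ab by auto
    have s0e: "s0 * (a + b) = b" unfolding s0_def using S by simp
    have "(b^2 * (1 - s0) + a^2 * s0) * (a + b) = b^2 * (a + b) - (s0 * (a + b)) * (b^2 - a^2)"
      by (simp add: algebra_simps)
    also have "\<dots> = (a * b) * (a + b)" unfolding s0e by (simp add: algebra_simps power2_eq_square)
    finally show ?thesis using S by simp
  qed
  have ss: "4 * s0 * (1 - s0) \<le> 1"
  proof -
    have "1 - 4 * s0 * (1 - s0) = (2 * s0 - 1)^2" by (simp add: power2_eq_square algebra_simps)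
    then show ?thesis by (smt (verit) zero_le_power2)
  qed
  let ?R = "region_VII (a^2) (b^2) t"
  let ?f = "\<lambda>\<delta>::real. (t * s0, a * b + \<delta>)"
  have "(?f \<longlongrightarrow> (t * s0, a * b + 0)) (at_right 0)"
    by (intro tendsto_intros)
  then have T: "(?f \<longlongrightarrow> (t * s0, a * b)) (at_right 0)" by simp
  have Tp: "((\<lambda>\<delta>::real. a * b + \<delta>) \<longlongrightarrow> a * b) (at_right 0)"
    using tendsto_snd[OF T] by simp
  have E1: "eventually (\<lambda>\<delta>::real. 0 < \<delta>) (at_right 0)" by (rule eventually_at_right_less)
  have E2: "eventually (\<lambda>\<delta>. a * b + \<delta> < b^2) (at_right 0)" using order_tendstoD(2)[OF Tp abl(2)] .
  have ev: "eventually (\<lambda>\<delta>. ?f \<delta> \<in> ?R) (at_right 0)"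
    using E1 E2
  proof eventually_elim
    case (elim \<delta>)
    have ab0: "0 < a * b" using ab by simp
    have "(a * b)^2 \<le> (a * b + \<delta>)^2" using elim ab0 by (intro power_mono) auto
    moreover have "4 * a^2 * b^2 * s0 * (1 - s0) \<le> (a * b)^2"
    proof -
      have "a^2 * b^2 * (4 * s0 * (1 - s0)) \<le> a^2 * b^2 * 1" using ss by (intro mult_left_mono) auto
      then show ?thesis by (simp add: power2_eq_square algebra_simps)
    qed
    ultimately have q2: "4 * a^2 * b^2 * s0 * (1 - s0) \<le> (a * b + \<delta>)^2" by linarith
    have st: "t * s0 / t = s0" using t by simp
    have q1: "0 < t * s0" "t * s0 < t" using s01 t by auto
    show ?case unfolding region_VII_def dom_D_def st sq L0
      using q1 q2 elim abl L0 by simp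
  qed
  have x0R: "(t * s0, a * b) \<in> closure ?R"
    by (rule Lim_in_closed_set[OF closed_closure _ _ T]) (use ev in \<open>auto elim!: eventually_mono intro: closure_subset[THEN subsetD]\<close>)
  have x0D: "(t * s0, a * b) \<in> dom_D (a^2) (b^2) t" unfolding dom_D_def using t s01 abl by auto
  define C where "C = {q::real\<times>real. a * b \<le> snd q} \<inter> {q. b^2 * (1 - fst q / t) + a^2 * (fst q / t) \<le> snd q}"
  have "closed C" unfolding C_def
    using t by (intro closed_Int closed_Collect_le continuous_intros) auto
  moreover have "?R \<subseteq> C" unfolding C_def region_VII_def sq by auto
  ultimately have RC: "closure ?R \<subseteq> C" by (rule closure_minimal[rotated])
  have x0e2: "(b^2 - a * b) / (b^2 - a^2) * t = t * s0" unfolding x0e by simp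
  show ?thesis unfolding max_attained_at_def closure_in_D_def x0e2 sq
  proof (intro conjI ballI)
    show "(t * s0, a * b) \<in> closure ?R \<inter> dom_D (a^2) (b^2) t" using x0R x0D by simp
  next
    fix y assume y: "y \<in> closure ?R \<inter> dom_D (a^2) (b^2) t"
    obtain tau p where yy: "y = (tau, p)" by fastforce
    have yD: "0 < tau" "tau < t" "a^2 < p" "p < b^2" using y yy unfolding dom_D_def by auto
    have yC: "a * b \<le> p" "b^2 * (1 - tau / t) + a^2 * (tau / t) \<le> p" using y yy RC unfolding C_def by auto
    have pp: "0 < p" using yD(3) by (smt (verit) zero_le_power2)
    have yL: "b^2 - tau / t * (b^2 - a^2) \<le> p" using yC(2) by (simp add: algebra_simps)
    have st: "t * s0 / t = s0" using t by simp
    show "coop_area (a^2) (b^2) t y \<le> coop_area (a^2) (b^2) t (t * s0, a * b)"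
      unfolding yy
    proof (rule area_le)
      fix w :: real assume w: "0 < w" "w \<le> 1"
      show "max (FF (a^2) (b^2) (tau/t) p w) 0 \<le> max (FF (a^2) (b^2) (t * s0 / t) (a * b) w) 0"
        unfolding st using pw7[of a b "tau/t" p w] ab yC yD w pp t yL unfolding s0_def by simp
    qed (use ab t yD pp abl s01 in auto)
  qed
qed

theorem proposition2:
  fixes c G0 t :: real
  assumes "0 < c" "c < G0" "0 < t"
  shows "max_attained_at (coop_area c G0 t) (closure_in_D c G0 t (region_II c G0 t))
           (t / 2, sqrt (c * G0))
       \<and> max_attained_at (coop_area c G0 t) (closure_in_D c G0 t (region_III c G0 t))
           (G0 / (G0 + c) * t, 2 * G0 * c / (G0 + c))
       \<and> max_attained_at (coop_area c G0 t) (closure_in_D c G0 t (region_VII c G0 t))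
           ((G0 - sqrt (c * G0)) / (G0 - c) * t, sqrt (c * G0))"
proof -
  define a where "a = sqrt c"
  define b where "b = sqrt G0"
  have c2: "a^2 = c" "b^2 = G0" unfolding a_def b_def using assms by auto
  have ab: "0 < a" "a < b" unfolding a_def b_def using assms by auto
  show ?thesis
    using regII[OF ab assms(3), unfolded c2] regIII[OF ab assms(3), unfolded c2]
      regVII[OF ab assms(3), unfolded c2] by blast
qed

end
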